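(* Let $U$ be a finite-dimensional real vector space and $\lambda\colon U_{\mathbb C}\to\mathbb C$ a polynomial function. For every entire function $\Psi\colon\mathbb C\to\mathbb C$ of finite order, there exists a holomorphic function $\nu$ on $U_{\mathbb C}$ with moderate vertical growth whose zero set is exactly $\lambda^{-1}(\{z\in\mathbb C:\Psi(z)=0\})$.
   Context: The order of an entire function $\Psi$ is the infimum of $e\ge0$ such that $|\Psi(z)|<C_e\exp(|z|^e)$ for all $z$ and some $C_e>0$. A holomorphic $\nu$ on $U_{\mathbb C}$ has moderate vertical growth if for every $M>0$ there is $r_M\in\mathbb R$ with $\sup_{\|\mathrm{Re}\,z\|<M}|\nu(z)|(1+\|z\|)^{r_M}<\infty$ for a Euclidean norm $\|\cdot\|$ on $U_{\mathbb C}$ (here $\mathrm{Re}\colon U_{\mathbb C}\to U$ is the real part). *)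

theory Defs
  imports "HOL-Analysis.Analysis"
begin

text \<open>U is modelled as real^'n (any finite-dimensional real vector space, of dimension
CARD('n) >= 1), and its complexification U_C as complex^'n with the Euclidean norm.\<close>

inductive poly_fun_Cn :: "(complex^'n \<Rightarrow> complex) \<Rightarrow> bool" where
  const: "poly_fun_Cn (\<lambda>z. c)"
| coord: "poly_fun_Cn (\<lambda>z. z $ i)"
| add: "poly_fun_Cn p \<Longrightarrow> poly_fun_Cn q \<Longrightarrow> poly_fun_Cn (\<lambda>z. p z + q z)"
| mult: "poly_fun_Cn p \<Longrightarrow> poly_fun_Cn q \<Longrightarrow> poly_fun_Cn (\<lambda>z. p z * q z)"

definition holomorphic_Cn :: "(complex^'n \<Rightarrow> complex) \<Rightarrow> bool" where
  "holomorphic_Cn f \<longleftrightarrow>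
     (\<forall>z. \<exists>D. (f has_derivative D) (at z) \<and> (\<forall>(c::complex) v. D (c *s v) = c * D v))"

definition Re_vec :: "complex^'n \<Rightarrow> real^'n" where
  "Re_vec z = (\<chi> i. Re (z $ i))"

definition moderate_vertical_growth :: "(complex^'n \<Rightarrow> complex) \<Rightarrow> bool" where
  "moderate_vertical_growth \<nu> \<longleftrightarrow>
     (\<forall>M>0. \<exists>r::real. \<exists>B::real. \<forall>z. norm (Re_vec z) < M \<longrightarrow>
        norm (\<nu> z) * (1 + norm z) powr r \<le> B)"

text \<open>Finite order: the set of admissible exponents e is nonempty (its infimum is finite).\<close>
definition finite_order :: "(complex \<Rightarrow> complex) \<Rightarrow> bool" where
  "finite_order \<Psi> \<longleftrightarrow>
     (\<exists>e::real. e \<ge> 0 \<and> (\<exists>C>0. \<forall>z. norm (\<Psi> z) < C * exp (norm z powr e)))"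

end

theory Submission
  imports Defs
begin

lemma holo_const: "holomorphic_Cn (\<lambda>z. c)"
  unfolding holomorphic_Cn_def
proof
  fix z show "\<exists>D. ((\<lambda>z. c) has_derivative D) (at z) \<and> (\<forall>(c::complex) v. D (c *s v) = c * D v)"
    by (rule exI[of _ "\<lambda>v. 0"]) (simp add: has_derivative_const)
qed

lemma holo_coord: "holomorphic_Cn (\<lambda>z::complex^'n. z $ i)"
  unfolding holomorphic_Cn_def
proof
  fix z :: "complex^'n"
  show "\<exists>D. ((\<lambda>z::complex^'n. z $ i) has_derivative D) (at z) \<and> (\<forall>(c::complex) v. D (c *s v) = c * D v)"
  proof (rule exI[of _ "\<lambda>v. v $ i"], rule conjI)
    show "((\<lambda>z::complex^'n. z $ i) has_derivative (\<lambda>v. v $ i)) (at z)"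
      by (rule bounded_linear.has_derivative[OF bounded_linear_vec_nth has_derivative_ident])
    show "\<forall>(c::complex) v. (c *s v) $ i = c * v $ i" by simp
  qed
qed

lemma holo_add: "holomorphic_Cn p \<Longrightarrow> holomorphic_Cn q \<Longrightarrow> holomorphic_Cn (\<lambda>z. p z + q z)"
  unfolding holomorphic_Cn_def
proof (intro allI)
  fix z assume a: "\<forall>z. \<exists>D. (p has_derivative D) (at z) \<and> (\<forall>(c::complex) v. D (c *s v) = c * D v)"
    and b: "\<forall>z. \<exists>D. (q has_derivative D) (at z) \<and> (\<forall>(c::complex) v. D (c *s v) = c * D v)"
  obtain D1 where 1: "(p has_derivative D1) (at z)" "\<forall>(c::complex) v. D1 (c *s v) = c * D1 v" using a by blast
  obtain D2 where 2: "(q has_derivative D2) (at z)" "\<forall>(c::complex) v. D2 (c *s v) = c * D2 v" using b by blast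
  show "\<exists>D. ((\<lambda>z. p z + q z) has_derivative D) (at z) \<and> (\<forall>(c::complex) v. D (c *s v) = c * D v)"
  proof (intro exI conjI)
    show "((\<lambda>z. p z + q z) has_derivative (\<lambda>v. D1 v + D2 v)) (at z)"
      by (rule has_derivative_add[OF 1(1) 2(1)])
    show "\<forall>(c::complex) v. D1 (c *s v) + D2 (c *s v) = c * (D1 v + D2 v)"
      using 1(2) 2(2) by (simp add: distrib_left)
  qed
qed

lemma holo_mult: "holomorphic_Cn p \<Longrightarrow> holomorphic_Cn q \<Longrightarrow> holomorphic_Cn (\<lambda>z. p z * q z)"
  unfolding holomorphic_Cn_def
proof (intro allI)
  fix z assume a: "\<forall>z. \<exists>D. (p has_derivative D) (at z) \<and> (\<forall>(c::complex) v. D (c *s v) = c * D v)"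
    and b: "\<forall>z. \<exists>D. (q has_derivative D) (at z) \<and> (\<forall>(c::complex) v. D (c *s v) = c * D v)"
  obtain D1 where 1: "(p has_derivative D1) (at z)" "\<forall>(c::complex) v. D1 (c *s v) = c * D1 v" using a by blast
  obtain D2 where 2: "(q has_derivative D2) (at z)" "\<forall>(c::complex) v. D2 (c *s v) = c * D2 v" using b by blast
  show "\<exists>D. ((\<lambda>z. p z * q z) has_derivative D) (at z) \<and> (\<forall>(c::complex) v. D (c *s v) = c * D v)"
  proof (intro exI conjI)
    show "((\<lambda>z. p z * q z) has_derivative (\<lambda>h. p z * D2 h + D1 h * q z)) (at z)"
      by (rule has_derivative_mult[OF 1(1) 2(1)])
    show "\<forall>(c::complex) v. p z * D2 (c *s v) + D1 (c *s v) * q z = c * (p z * D2 v + D1 v * q z)"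
      using 1(2) 2(2) by (simp add: distrib_left mult.left_commute)
  qed
qed

lemma holo_comp: assumes "h holomorphic_on UNIV" "holomorphic_Cn f"
  shows "holomorphic_Cn (\<lambda>z. h (f z))"
  unfolding holomorphic_Cn_def
proof
  fix z
  obtain D1 where 1: "(f has_derivative D1) (at z)" "\<forall>(c::complex) v. D1 (c *s v) = c * D1 v"
    using assms(2) unfolding holomorphic_Cn_def by blast
  have "h field_differentiable at (f z)"
    using assms(1) holomorphic_on_imp_differentiable_at by blast
  then obtain d where "(h has_field_derivative d) (at (f z))"
    unfolding field_differentiable_def by blast
  hence "(h has_derivative (*) d) (at (f z))" by (rule has_field_derivative_imp_has_derivative)
  hence "((\<lambda>z. h (f z)) has_derivative (\<lambda>v. d * D1 v)) (at z)"
    using has_derivative_compose[OF 1(1)] by blast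
  thus "\<exists>D. ((\<lambda>z. h (f z)) has_derivative D) (at z) \<and> (\<forall>(c::complex) v. D (c *s v) = c * D v)"
    using 1(2) by (intro exI[of _ "\<lambda>v. d * D1 v"]) (auto simp: algebra_simps)
qed

lemma poly_holo: "poly_fun_Cn p \<Longrightarrow> holomorphic_Cn p"
  by (induction rule: poly_fun_Cn.induct) (auto intro: holo_const holo_coord holo_add holo_mult)

lemma poly_pow: "poly_fun_Cn p \<Longrightarrow> poly_fun_Cn (\<lambda>z. p z ^ k)"
proof (induction k)
  case 0 then show ?case using poly_fun_Cn.const[of 1] by simp
next
  case (Suc k) then show ?case using poly_fun_Cn.mult[OF Suc.prems Suc.IH] by simp
qed

lemma poly_sum: "finite S \<Longrightarrow> (\<And>i. i \<in> S \<Longrightarrow> poly_fun_Cn (f i)) \<Longrightarrow> poly_fun_Cn (\<lambda>z. \<Sum>i\<in>S. f i z)"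
proof (induction S rule: finite_induct)
  case empty then show ?case using poly_fun_Cn.const[of 0] by simp
next
  case (insert x F) then show ?case using poly_fun_Cn.add[of "f x" "\<lambda>z. \<Sum>i\<in>F. f i z"] by simp
qed

lemma poly_bound: "poly_fun_Cn p \<Longrightarrow> \<exists>K d. K \<ge> 0 \<and> (\<forall>z. norm (p z) \<le> K * (1 + norm z) ^ d)"
proof (induction rule: poly_fun_Cn.induct)
  case (const c) then show ?case by (intro exI[of _ "norm c"] exI[of _ 0]) auto
next
  case (coord i) show ?case
    apply (intro exI[of _ 1] exI[of _ 1] conjI allI)
     apply simp
    apply simp
    subgoal for z using Finite_Cartesian_Product.norm_nth_le[of z i] by linarith
    done
next
  case (add p q)
  then obtain K1 d1 K2 d2 where 1: "K1 \<ge> 0" "\<forall>z. norm (p z) \<le> K1 * (1 + norm z) ^ d1"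
    and 2: "K2 \<ge> 0" "\<forall>z. norm (q z) \<le> K2 * (1 + norm z) ^ d2" by blast
  have "norm (p z + q z) \<le> (K1 + K2) * (1 + norm z) ^ max d1 d2" for z
  proof -
    have a: "(1 + norm z) ^ d1 \<le> (1 + norm z) ^ max d1 d2" "(1 + norm z) ^ d2 \<le> (1 + norm z) ^ max d1 d2"
      by (rule power_increasing, simp, simp)+
    have b1: "norm (p z) \<le> K1 * (1 + norm z) ^ max d1 d2"
      using 1(2) mult_left_mono[OF a(1) 1(1)] by (blast intro: order_trans)
    have b2: "norm (q z) \<le> K2 * (1 + norm z) ^ max d1 d2"
      using 2(2) mult_left_mono[OF a(2) 2(1)] by (blast intro: order_trans)
    have "norm (p z + q z) \<le> norm (p z) + norm (q z)" by (rule norm_triangle_ineq)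
    also have "\<dots> \<le> K1 * (1 + norm z) ^ max d1 d2 + K2 * (1 + norm z) ^ max d1 d2"
      by (rule add_mono[OF b1 b2])
    finally show ?thesis by (simp add: distrib_right)
  qed
  then show ?case using 1(1) 2(1) by (intro exI[of _ "K1+K2"] exI[of _ "max d1 d2"]) simp
next
  case (mult p q)
  then obtain K1 d1 K2 d2 where 1: "K1 \<ge> 0" "\<forall>z. norm (p z) \<le> K1 * (1 + norm z) ^ d1"
    and 2: "K2 \<ge> 0" "\<forall>z. norm (q z) \<le> K2 * (1 + norm z) ^ d2" by blast
  have "norm (p z * q z) \<le> (K1 * K2) * (1 + norm z) ^ (d1 + d2)" for z
  proof -
    have "norm (p z * q z) = norm (p z) * norm (q z)" by (simp add: norm_mult)
    also have "\<dots> \<le> (K1 * (1 + norm z) ^ d1) * (K2 * (1 + norm z) ^ d2)"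
      by (rule mult_mono[OF 1(2)[rule_format] 2(2)[rule_format]]) (use 1(1) in simp_all)
    also have "\<dots> = (K1 * K2) * (1 + norm z) ^ (d1 + d2)" by (simp add: power_add mult_ac)
    finally show ?thesis .
  qed
  then show ?case using 1(1) 2(1) by (intro exI[of _ "K1*K2"] exI[of _ "d1+d2"]) simp
qed



lemma re_pow_bound:
  fixes w :: complex and P :: nat
  assumes "4 dvd P" "\<bar>Re w\<bar> \<le> M"
  shows "(Im w) ^ P - real P * M * (\<bar>Im w\<bar> + M) ^ (P - 1) \<le> Re (w ^ P)"
proof -
  obtain k where k: "P = 4 * k" using assms(1) by blast
  define v where "v = \<i> * complex_of_real (Im w)"
  define R where "R = \<bar>Im w\<bar> + M"
  have M0: "0 \<le> M" using assms(2) by linarith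
  have ip: "\<i> ^ P = 1" unfolding k power_mult by simp
  have vP: "v ^ P = complex_of_real ((Im w) ^ P)"
    unfolding v_def power_mult_distrib ip by simp
  have nw: "norm w \<le> R" unfolding R_def using cmod_le[of w] assms(2) by linarith
  have nv: "norm v \<le> R" unfolding R_def v_def using M0 by (simp add: norm_mult)
  have R0: "0 \<le> R" using nv norm_ge_zero order_trans by blast
  have wv: "w - v = complex_of_real (Re w)" unfolding v_def by (simp add: complex_eq_iff)
  have S: "norm (\<Sum>i<P. v^(P - Suc i) * w^i) \<le> real P * R ^ (P - 1)"
  proof -
    have "norm (\<Sum>i<P. v^(P - Suc i) * w^i) \<le> (\<Sum>i<P. norm (v^(P - Suc i) * w^i))"
      by (rule norm_sum)
    also have "\<dots> \<le> (\<Sum>i<P. R ^ (P - 1))"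
    proof (rule sum_mono)
      fix i assume i: "i \<in> {..<P}"
      have "norm (v^(P - Suc i) * w^i) = norm v ^ (P - Suc i) * norm w ^ i"
        by (simp add: norm_mult norm_power)
      also have "\<dots> \<le> R ^ (P - Suc i) * R ^ i"
        using R0 by (intro mult_mono power_mono nv nw) auto
      also have "\<dots> = R ^ (P - 1)" using i by (simp add: power_add[symmetric])
      finally show "norm (v^(P - Suc i) * w^i) \<le> R ^ (P - 1)" .
    qed
    also have "\<dots> = real P * R ^ (P - 1)" by simp
    finally show ?thesis .
  qed
  have "norm (w ^ P - v ^ P) = norm (w - v) * norm (\<Sum>i<P. v^(P - Suc i) * w^i)"
    by (simp add: power_diff_sumr2 norm_mult)
  also have "\<dots> \<le> M * (real P * R ^ (P - 1))"
    using S assms(2) wv by (intro mult_mono) auto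
  finally have d: "norm (w ^ P - v ^ P) \<le> real P * M * R ^ (P - 1)" by (simp add: mult_ac)
  have "Re (w ^ P) = Re (v ^ P) + Re (w ^ P - v ^ P)" by simp
  moreover have "Re (v ^ P) = (Im w) ^ P" using vP by simp
  moreover have "- norm (w ^ P - v ^ P) \<le> Re (w ^ P - v ^ P)"
    using abs_Re_le_cmod[of "w ^ P - v ^ P"] by linarith
  ultimately show ?thesis using d unfolding R_def by linarith
qed

lemma dom_bound:
  fixes A c :: real and P :: nat
  assumes "1 \<le> c" "0 \<le> A" "0 < P"
  shows "\<exists>B. \<forall>t\<ge>0. A * (c + t) ^ (P - 1) - t ^ P \<le> B"
proof -
  define T where "T = max c (A * 2 ^ (P - 1))"
  have "A * (c + t) ^ (P - 1) - t ^ P \<le> A * (c + T) ^ (P - 1)" if t: "t \<ge> 0" for t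
  proof (cases "t \<le> T")
    case True
    have "(c + t) ^ (P - 1) \<le> (c + T) ^ (P - 1)"
      using True t assms(1) by (intro power_mono) auto
    hence "A * (c + t) ^ (P - 1) \<le> A * (c + T) ^ (P - 1)" using assms(2) by (rule mult_left_mono)
    moreover have "0 \<le> t ^ P" using t by simp
    ultimately show ?thesis by linarith
  next
    case False
    hence tc: "c \<le> t" "A * 2 ^ (P - 1) \<le> t" unfolding T_def by auto
    have "(c + t) ^ (P - 1) \<le> (2 * t) ^ (P - 1)"
      using tc assms(1) by (intro power_mono) auto
    hence "A * (c + t) ^ (P - 1) \<le> A * (2 * t) ^ (P - 1)" using assms(2) by (rule mult_left_mono)
    also have "\<dots> = (A * 2 ^ (P - 1)) * t ^ (P - 1)" by (simp add: power_mult_distrib)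
    also have "\<dots> \<le> t * t ^ (P - 1)" using tc t by (intro mult_right_mono) auto
    also have "\<dots> = t ^ P" using assms(3) by (cases P) auto
    finally have "A * (c + t) ^ (P - 1) - t ^ P \<le> 0" by simp
    moreover have "0 \<le> A * (c + T) ^ (P - 1)" using assms T_def t by simp
    ultimately show ?thesis by linarith
  qed
  thus ?thesis by blast
qed



theorem mainTheorem5:
  fixes lam :: "complex^'n \<Rightarrow> complex" and \<Psi> :: "complex \<Rightarrow> complex"
  assumes "poly_fun_Cn lam"
    and "\<Psi> holomorphic_on UNIV"
    and "finite_order \<Psi>"
  shows "\<exists>\<nu> :: complex^'n \<Rightarrow> complex. holomorphic_Cn \<nu> \<and> moderate_vertical_growth \<nu> \<and>
           {z. \<nu> z = 0} = {z. \<Psi> (lam z) = 0}"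
proof -
  obtain K d where K0: "K \<ge> 0" and Kb: "\<And>z. norm (lam z) \<le> K * (1 + norm z) ^ d"
    using poly_bound[OF assms(1)] by blast
  obtain e C where e0: "e \<ge> 0" and C0: "C > 0" and Cb: "\<And>w. norm (\<Psi> w) < C * exp (norm w powr e)"
    using assms(3) unfolding finite_order_def by blast
  define N where "N = nat \<lceil>real d * e\<rceil>"
  define A0 where "A0 = K powr e"
  have A00: "A0 \<ge> 0" unfolding A0_def by simp
  have psib: "norm (\<Psi> (lam z)) \<le> C * exp (A0 * (1 + norm z) ^ N)" for z
  proof -
    have z1: "1 \<le> 1 + norm z" by simp
    have pz: "0 < 1 + norm z" using z1 by linarith
    have "norm (lam z) powr e \<le> (K * (1 + norm z) ^ d) powr e"
      by (rule powr_mono2[OF e0 norm_ge_zero Kb])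
    also have "\<dots> = A0 * ((1 + norm z) ^ d) powr e" unfolding A0_def by (rule powr_mult)
    also have "((1 + norm z) ^ d) powr e = (1 + norm z) powr (real d * e)"
    proof -
      have "(1 + norm z) ^ d = (1 + norm z) powr real d" by (rule powr_realpow[OF pz, symmetric])
      thus ?thesis by (simp add: powr_powr)
    qed
    also have "\<dots> \<le> (1 + norm z) powr (real N)"
      unfolding N_def by (rule powr_mono[OF _ z1]) linarith
    also have "\<dots> = (1 + norm z) ^ N" by (rule powr_realpow[OF pz])
    finally have "norm (lam z) powr e \<le> A0 * (1 + norm z) ^ N"
      using A00 by (simp add: mult_left_mono)
    hence "exp (norm (lam z) powr e) \<le> exp (A0 * (1 + norm z) ^ N)" by simp
    hence "C * exp (norm (lam z) powr e) \<le> C * exp (A0 * (1 + norm z) ^ N)"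
      using C0 by simp
    thus ?thesis using Cb[of "lam z"] by linarith
  qed
  define P where "P = 4 * (N + 1)"
  have P4: "4 dvd P" unfolding P_def by simp
  have PN: "N \<le> P - 1" "0 < P" unfolding P_def by auto
  have Pev: "even P" using P4 unfolding P_def by simp
  define g where "g = (\<lambda>z::complex^'n. \<Sum>i\<in>UNIV. (z $ i) ^ P)"
  define \<nu> where "\<nu> = (\<lambda>z. \<Psi> (lam z) * exp (- g z))"
  have gp: "poly_fun_Cn g" unfolding g_def
    by (rule poly_sum) (auto intro: poly_pow poly_fun_Cn.coord)
  have eh: "(\<lambda>w. exp (- w)) holomorphic_on UNIV" by (intro holomorphic_intros)
  have hol: "holomorphic_Cn \<nu>" unfolding \<nu>_def
    by (rule holo_mult[OF holo_comp[OF assms(2) poly_holo[OF assms(1)]] holo_comp[OF eh poly_holo[OF gp]]])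
  have zer: "{z. \<nu> z = 0} = {z. \<Psi> (lam z) = 0}" unfolding \<nu>_def by simp
  have mvg: "moderate_vertical_growth \<nu>"
    unfolding moderate_vertical_growth_def
  proof (intro allI impI)
    fix M :: real assume M0: "M > 0"
    define n where "n = real CARD('n)"
    have n1: "n \<ge> 1" unfolding n_def by simp
    define c where "c = 1 + M"
    have c1: "1 \<le> c" unfolding c_def using M0 by simp
    define A1 where "A1 = A0 * n ^ N + n * real P * M"
    have A10: "A1 \<ge> 0" unfolding A1_def using A00 n1 M0 by simp
    obtain B0 where B0: "\<And>t. t \<ge> 0 \<Longrightarrow> A1 * (c + t) ^ (P - 1) - t ^ P \<le> B0"
      using dom_bound[OF c1 A10 PN(2)] by blast
    have "norm (\<nu> z) * (1 + norm z) powr 0 \<le> C * exp B0" if zM: "norm (Re_vec z) < M" for z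
    proof -
      have reb: "\<bar>Re (z $ i)\<bar> \<le> M" for i
        using component_le_norm_cart[of "Re_vec z" i] zM unfolding Re_vec_def by simp
      define t where "t = Max (range (\<lambda>i. \<bar>Im (z $ i)\<bar>))"
      have tb: "\<bar>Im (z $ i)\<bar> \<le> t" for i unfolding t_def by (rule Max_ge) auto
      have "t \<in> range (\<lambda>i. \<bar>Im (z $ i)\<bar>)" unfolding t_def by (rule Max_in) auto
      then obtain i0 where i0: "\<bar>Im (z $ i0)\<bar> = t" by auto
      have t0: "t \<ge> 0" using tb[of i0] by simp
      have "norm z \<le> (\<Sum>i\<in>UNIV. norm (z $ i))"
        unfolding norm_vec_def by (rule L2_set_le_sum) auto
      also have "\<dots> \<le> (\<Sum>i\<in>(UNIV::'n set). M + t)"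
      proof (rule sum_mono)
        fix i show "norm (z $ i) \<le> M + t" using cmod_le[of "z $ i"] reb[of i] tb[of i] by linarith
      qed
      also have "\<dots> = n * (M + t)" unfolding n_def by simp
      finally have nz: "norm z \<le> n * (M + t)" .
      have "1 + norm z \<le> n * (c + t)" using nz n1 unfolding c_def by (simp add: algebra_simps)
      hence "(1 + norm z) ^ N \<le> (n * (c + t)) ^ N" by (intro power_mono) auto
      also have "\<dots> = n ^ N * (c + t) ^ N" by (simp add: power_mult_distrib)
      also have "\<dots> \<le> n ^ N * (c + t) ^ (P - 1)"
        using n1 c1 t0 PN(1) by (intro mult_left_mono power_increasing) auto
      finally have g1: "A0 * (1 + norm z) ^ N \<le> A0 * (n ^ N * (c + t) ^ (P - 1))"
        using A00 by (simp add: mult_left_mono)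
      have "Re (g z) = (\<Sum>i\<in>UNIV. Re ((z $ i) ^ P))" unfolding g_def by simp
      also have "\<dots> \<ge> (\<Sum>i\<in>(UNIV::'n set). \<bar>Im (z $ i)\<bar> ^ P - real P * M * (c + t) ^ (P - 1))"
      proof (rule sum_mono)
        fix i
        have "\<bar>Im (z $ i)\<bar> ^ P = (Im (z $ i)) ^ P" using Pev by (rule power_even_abs)
        moreover have "(\<bar>Im (z $ i)\<bar> + M) ^ (P - 1) \<le> (c + t) ^ (P - 1)"
          using tb[of i] M0 unfolding c_def by (intro power_mono) auto
        hence "real P * M * (\<bar>Im (z $ i)\<bar> + M) ^ (P - 1) \<le> real P * M * (c + t) ^ (P - 1)"
          using M0 by (intro mult_left_mono) auto
        ultimately show "\<bar>Im (z $ i)\<bar> ^ P - real P * M * (c + t) ^ (P - 1) \<le> Re ((z $ i) ^ P)"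
          using re_pow_bound[OF P4 reb[of i]] by linarith
      qed
      finally have "Re (g z) \<ge> (\<Sum>i\<in>UNIV. \<bar>Im (z $ i)\<bar> ^ P) - n * (real P * M * (c + t) ^ (P - 1))"
        unfolding n_def by (simp add: sum_subtractf)
      moreover have "(\<Sum>i\<in>UNIV. \<bar>Im (z $ i)\<bar> ^ P) \<ge> \<bar>Im (z $ i0)\<bar> ^ P"
        by (rule member_le_sum) auto
      ultimately have g2: "Re (g z) \<ge> t ^ P - n * (real P * M * (c + t) ^ (P - 1))"
        using i0 by (simp only:)
      have "A0 * (1 + norm z) ^ N - Re (g z) \<le> A1 * (c + t) ^ (P - 1) - t ^ P"
        using g1 g2 unfolding A1_def by (simp add: algebra_simps)
      also have "\<dots> \<le> B0" by (rule B0[OF t0])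
      finally have ex: "A0 * (1 + norm z) ^ N - Re (g z) \<le> B0" .
      have "norm (\<nu> z) = norm (\<Psi> (lam z)) * exp (- Re (g z))"
        unfolding \<nu>_def by (simp add: norm_mult)
      also have "\<dots> \<le> C * exp (A0 * (1 + norm z) ^ N) * exp (- Re (g z))"
        using psib[of z] by (rule mult_right_mono) simp
      also have "\<dots> = C * exp (A0 * (1 + norm z) ^ N - Re (g z))"
        by (simp add: exp_diff exp_minus field_simps)
      also have "\<dots> \<le> C * exp B0" using ex C0 by simp
      finally have "norm (\<nu> z) \<le> C * exp B0" .
      moreover have "(1 + norm z) powr 0 = 1"
      proof -
        have "1 + norm z \<noteq> 0" using norm_ge_zero[of z] by linarith
        thus ?thesis by simp
      qed
      ultimately show ?thesis by simp
    qed
    thus "\<exists>r B. \<forall>z. norm (Re_vec z) < M \<longrightarrow> norm (\<nu> z) * (1 + norm z) powr r \<le> B" by blast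
  qed
  show ?thesis using hol mvg zer by blast
qed

end
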